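(* Let $m \ge 1$ and let $Z_1,\dots,Z_{m+1}$ be a finitely exchangeable sequence of Bernoulli random variables. Let $S_m = \sum_{i=1}^m Z_i$ and $S_{m+1} = \sum_{i=1}^{m+1} Z_i$. If $S_m$ is not uniformly distributed on $\{0,1,\dots,m\}$, then $S_{m+1}$ is not uniformly distributed on $\{0,1,\dots,m+1\}$.
   Context: Finitely exchangeable means the joint distribution of $(Z_1,\dots,Z_{m+1})$ is invariant under permutations of the indices. *)

theory Defs
  imports "HOL-Probability.Probability"
begin

definition joint_distr :: "'a measure \<Rightarrow> (nat \<Rightarrow> 'a \<Rightarrow> nat) \<Rightarrow> nat \<Rightarrow> (nat \<Rightarrow> nat) measure" where
  "joint_distr M Z n = distr M (PiM {..n} (\<lambda>_. count_space UNIV)) (\<lambda>\<omega>. \<lambda>i\<in>{..n}. Z i \<omega>)"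

definition finitely_exchangeable :: "'a measure \<Rightarrow> (nat \<Rightarrow> 'a \<Rightarrow> nat) \<Rightarrow> nat \<Rightarrow> bool" where
  "finitely_exchangeable M Z n \<longleftrightarrow>
     (\<forall>\<sigma>. \<sigma> permutes {..n} \<longrightarrow> joint_distr M (\<lambda>i. Z (\<sigma> i)) n = joint_distr M Z n)"

definition uniform_on_upto :: "'a measure \<Rightarrow> ('a \<Rightarrow> nat) \<Rightarrow> nat \<Rightarrow> bool" where
  "uniform_on_upto M S k \<longleftrightarrow>
     (\<forall>j\<in>{0..k}. measure M {\<omega>\<in>space M. S \<omega> = j} = 1 / real (k + 1))"

end

theory Submission
  imports Defs
begin

theorem lemmaA8:
  fixes M :: "'a measure" and Z :: "nat \<Rightarrow> 'a \<Rightarrow> nat" and m :: nat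
  assumes "prob_space M"
    and "m \<ge> 1"
    and "\<And>i. i \<le> m \<Longrightarrow> Z i \<in> measurable M (count_space UNIV)"
    and "\<And>i \<omega>. i \<le> m \<Longrightarrow> \<omega> \<in> space M \<Longrightarrow> Z i \<omega> \<in> {0, 1}"
    and "finitely_exchangeable M Z m"
    and "\<not> uniform_on_upto M (\<lambda>\<omega>. \<Sum>i<m. Z i \<omega>) m"
  shows "\<not> uniform_on_upto M (\<lambda>\<omega>. \<Sum>i\<le>m. Z i \<omega>) (m + 1)"
proof
  assume U: "uniform_on_upto M (\<lambda>\<omega>. \<Sum>i\<le>m. Z i \<omega>) (m + 1)"
  interpret prob_space M by fact
  define N where "N = PiM {..m} (\<lambda>_. count_space (UNIV::nat set))"
  define V where "V = (\<lambda>\<omega>. \<lambda>j\<in>{..m}. Z j \<omega>)"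
  have Vm: "V \<in> M \<rightarrow>\<^sub>M N" unfolding V_def N_def
    by (rule measurable_restrict) (use assms(3) in auto)
  have Vsp: "V \<omega> \<in> space N" for \<omega> unfolding V_def N_def by (simp add: space_PiM)
  have setsM: "{\<omega>\<in>space M. Q (V \<omega>)} \<in> sets M" if "{x\<in>space N. Q x} \<in> sets N" for Q
  proof -
    have "{\<omega>\<in>space M. Q (V \<omega>)} = V -` {x\<in>space N. Q x} \<inter> space M" using Vsp by auto
    then show ?thesis using measurable_sets[OF Vm that] by simp
  qed
  define S where "S = (\<lambda>\<omega>. \<Sum>j\<le>m. Z j \<omega>)"
  define T where "T = (\<lambda>\<omega>. \<Sum>j<m. Z j \<omega>)"
  define E where "E = (\<lambda>k i. {\<omega>\<in>space M. S \<omega> = k \<and> Z i \<omega> = 1})"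
  define P where "P = (\<lambda>k. {\<omega>\<in>space M. S \<omega> = k})"
  have SV: "S \<omega> = (\<Sum>j\<le>m. V \<omega> j)" for \<omega> unfolding S_def V_def by simp
  have TV: "T \<omega> = (\<Sum>j<m. V \<omega> j)" for \<omega> unfolding T_def V_def by simp
  have ZV: "i \<le> m \<Longrightarrow> Z i \<omega> = V \<omega> i" for i \<omega> unfolding V_def by simp
  have Esets: "E k i \<in> sets M" if "i \<le> m" for k i
  proof -
    have "E k i = {\<omega>\<in>space M. (\<lambda>x. (\<Sum>j\<le>m. x j) = k \<and> x i = 1) (V \<omega>)}"
      unfolding E_def using SV ZV[OF that] by auto
    also have "\<dots> \<in> sets M" apply (rule setsM) unfolding N_def apply measurable using that by auto
    finally show ?thesis .
  qed
  have Psets: "P k \<in> sets M" for k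
  proof -
    have "P k = {\<omega>\<in>space M. (\<lambda>x. (\<Sum>j\<le>m. x j) = k) (V \<omega>)}"
      unfolding P_def using SV by auto
    also have "\<dots> \<in> sets M" apply (rule setsM) unfolding N_def by measurable
    finally show ?thesis .
  qed
  have Tsets: "{\<omega>\<in>space M. T \<omega> = k} \<in> sets M" for k
  proof -
    have "{\<omega>\<in>space M. T \<omega> = k} = {\<omega>\<in>space M. (\<lambda>x. (\<Sum>j<m. x j) = k) (V \<omega>)}"
      using TV by auto
    also have "\<dots> \<in> sets M" apply (rule setsM) unfolding N_def by measurable
    finally show ?thesis .
  qed
  have exch: "measure M (E k i) = measure M (E k m)" if "i \<le> m" for k i
  proof -
    define \<sigma> where "\<sigma> = Transposition.transpose i m"
    have perm: "\<sigma> permutes {..m}" unfolding \<sigma>_def using that by (intro permutes_swap_id) auto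
    have eq: "joint_distr M (\<lambda>j. Z (\<sigma> j)) m = joint_distr M Z m"
      using assms(5) perm unfolding finitely_exchangeable_def by blast
    define W where "W = (\<lambda>\<omega>. \<lambda>j\<in>{..m}. Z (\<sigma> j) \<omega>)"
    have Wm: "W \<in> M \<rightarrow>\<^sub>M N" unfolding W_def N_def
      proof (rule measurable_restrict)
      fix j assume "j \<in> {..m}"
      then have "\<sigma> j \<le> m" using permutes_in_image[OF perm] by auto
      then show "(Z (\<sigma> j)) \<in> M \<rightarrow>\<^sub>M count_space UNIV" by (rule assms(3))
    qed
    define A where "A = {x\<in>space N. (\<Sum>j\<le>m. x j) = k \<and> x m = 1}"
    have A: "A \<in> sets N" unfolding A_def N_def by measurable
    have "measure (distr M N W) A = measure (distr M N V) A"
      using eq unfolding joint_distr_def W_def V_def N_def by simp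
    then have "measure M (W -` A \<inter> space M) = measure M (V -` A \<inter> space M)"
      using measure_distr[OF Wm A] measure_distr[OF Vm A] by simp
    moreover have "V -` A \<inter> space M = E k m"
      unfolding A_def E_def using Vsp SV ZV[of m] by auto
    moreover have "W -` A \<inter> space M = E k i"
    proof -
      have s: "(\<Sum>j\<le>m. Z (\<sigma> j) \<omega>) = S \<omega>" for \<omega>
        using sum.permute[OF perm, of "\<lambda>j. Z j \<omega>"] unfolding S_def by (simp add: comp_def)
      have "\<sigma> m = i" unfolding \<sigma>_def by simp
      moreover have "W \<omega> \<in> space N" for \<omega> unfolding W_def N_def by (simp add: space_PiM)
      ultimately show ?thesis unfolding A_def E_def W_def using s by auto
    qed
    ultimately show ?thesis by simp
  qed
  have sumE: "(\<Sum>i\<le>m. measure M (E k i)) = real k * measure M (P k)" for k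
  proof -
    have "(\<Sum>i\<le>m. measure M (E k i)) = (\<Sum>i\<le>m. integral\<^sup>L M (indicator (E k i)))"
      using Esets by (simp add: Int_absorb2 sets.sets_into_space)
    also have "\<dots> = integral\<^sup>L M (\<lambda>\<omega>. \<Sum>i\<le>m. indicator (E k i) \<omega>)"
      by (rule Bochner_Integration.integral_sum[of "{..m}" M "\<lambda>i. indicator (E k i)", symmetric]) (use Esets in \<open>auto intro!: integrable_real_indicator simp: less_top[symmetric]\<close>)
    also have "\<dots> = integral\<^sup>L M (\<lambda>\<omega>. real k * indicator (P k) \<omega>)"
    proof (rule Bochner_Integration.integral_cong[OF refl])
      fix \<omega> assume w: "\<omega> \<in> space M"
      show "(\<Sum>i\<le>m. indicator (E k i) \<omega>) = real k * indicator (P k) \<omega>"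
      proof (cases "S \<omega> = k")
        case True
        have "(\<Sum>i\<le>m. indicator (E k i) \<omega> :: real) = (\<Sum>i\<le>m. real (Z i \<omega>))"
          using assms(4)[OF _ w] True w by (intro sum.cong) (auto simp: E_def indicator_def)
        also have "\<dots> = real k" using True unfolding S_def by (metis of_nat_sum)
        finally show ?thesis using True w by (simp add: P_def indicator_def)
      qed (auto simp: E_def P_def indicator_def)
    qed
    also have "\<dots> = real k * measure M (P k)"
      using Psets by (simp add: Int_absorb2 sets.sets_into_space)
    finally show ?thesis .
  qed
  have Em: "real (m+1) * measure M (E k m) = real k * measure M (P k)" for k
  proof -
    have "(\<Sum>i\<le>m. measure M (E k i)) = (\<Sum>i\<le>m. measure M (E k m))"
      by (intro sum.cong) (auto intro: exch)
    then show ?thesis using sumE[of k] by simp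
  qed
  have Tform: "measure M {\<omega>\<in>space M. T \<omega> = j} = measure M (P j) - measure M (E j m) + measure M (E (Suc j) m)" for j
  proof -
    have "measure M {\<omega>\<in>space M. T \<omega> = j} = integral\<^sup>L M (indicator {\<omega>\<in>space M. T \<omega> = j})"
      by (simp add: Int_absorb2)
    also have "\<dots> = integral\<^sup>L M (\<lambda>\<omega>. indicator (P j) \<omega> - indicator (E j m) \<omega> + indicator (E (Suc j) m) \<omega>)"
    proof (rule Bochner_Integration.integral_cong[OF refl])
      fix \<omega> assume w: "\<omega> \<in> space M"
      have ST: "S \<omega> = T \<omega> + Z m \<omega>" unfolding S_def T_def by (simp add: lessThan_Suc_atMost[symmetric])
      show "indicator {\<omega>\<in>space M. T \<omega> = j} \<omega> = (indicator (P j) \<omega> - indicator (E j m) \<omega> + indicator (E (Suc j) m) \<omega> :: real)"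
        using assms(4)[OF _ w, of m] w ST by (auto simp: E_def P_def indicator_def)
    qed
    also have "\<dots> = measure M (P j) - measure M (E j m) + measure M (E (Suc j) m)"
      using Psets Esets by (simp add: Int_absorb2 sets.sets_into_space less_top[symmetric])
    finally show ?thesis .
  qed
  have PU: "k \<le> m+1 \<Longrightarrow> measure M (P k) = 1 / real (m+2)" for k
    using U unfolding uniform_on_upto_def P_def S_def by auto
  have "uniform_on_upto M (\<lambda>\<omega>. \<Sum>i<m. Z i \<omega>) m"
    unfolding uniform_on_upto_def
  proof
    fix j assume j: "j \<in> {0..m}"
    have e: "measure M (E k m) = real k * measure M (P k) / real (m+1)" for k
      using Em[of k] by (simp add: field_simps)
    have p1: "measure M (P j) = 1 / real (m+2)" using PU[of j] j by simp
    have p2: "measure M (P (Suc j)) = 1 / real (m+2)" using PU[of "Suc j"] j by simp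
    have "measure M {\<omega>\<in>space M. T \<omega> = j}
       = 1 / real (m+2) - real j * (1 / real (m+2)) / real (m+1) + real (Suc j) * (1 / real (m+2)) / real (m+1)"
      unfolding Tform e p1 p2 ..
    also have "\<dots> = 1 / real (m+1)"
    proof -
      have g: "1 / b - y * (1 / b) / a + (y+1) * (1 / b) / a = 1 / a"
        if "a > 0" "b = a + 1" for a b y :: real
      proof -
        have "1 / b - y * (1 / b) / a + (y+1) * (1 / b) / a = (1/b) * (1 + 1/a)"
          by (simp add: algebra_simps add_divide_distrib diff_divide_distrib)
        also have "1 + 1/a = b / a" using that by (simp add: field_simps)
        finally show ?thesis using that by simp
      qed
      have h: "1 / (x+2) - y * (1 / (x+2)) / (x+1) + (y+1) * (1 / (x+2)) / (x+1) = 1 / (x+1)"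
        if "x \<ge> 0" for x y :: real
        using g[of "x+1" "x+2" y] that by (simp add: add.assoc)
      show ?thesis using h[of "real m" "real j"] by (simp add: add.commute)
    qed
    finally have "measure M {\<omega>\<in>space M. T \<omega> = j} = 1 / real (m+1)" .
    then show "measure M {\<omega>\<in>space M. (\<Sum>i<m. Z i \<omega>) = j} = 1 / real (m + 1)"
      unfolding T_def .
  qed
  then show False using assms(6) by simp
qed
end
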